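(* Let $n\ge1$ and $\alpha,\beta\in(0,1]$. The following two properties hold. (a) For all $\mathcal{C},\mathcal{C}'\in\{\bullet,\circ\}^n$ and every $\widehat{T}\in\mathcal{F}(\mathcal{C}'\to\mathcal{C})$, we have $\hat\mu(\widehat{T})=\mu(f(\widehat{T}))\,W(\mathcal{C}'\to\mathcal{C})$. (b) For every $\widehat{T}\in\widehat{\mathcal{T}}_n$, we have $\hat\mu(\pi(\widehat{T}))=\hat\mu(\widehat{T})$.
   Context: Open-boundary TASEP on $n$ sites: this is the continuous-time Markov chain on $\{\bullet,\circ\}^n$ (strings of length $n$, where $\bullet$ denotes a particle and $\circ$ a hole). Its transition rates are as follows, with $\mathcal{A},\mathcal{A}'$ arbitrary strings: - $W(\circ\mathcal{A}\to\bullet\mathcal{A})=\alpha$; - $W(\mathcal{A}\bullet\to\mathcal{A}\circ)=\beta$; - $W(\mathcal{A}\bullet\circ\mathcal{A}'\to\mathcal{A}\circ\bullet\mathcal{A}')=1$; - $W(\mathcal{C}\to\mathcal{C}')=0$ for all other pairs. A plane binary tree is a finite rooted tree in which every vertex is either an endpoint (a leaf, with no children) or has exactly two children, an ordered left child and right child. Every non-root vertex is thus either a left descendent or a right descendent of its parent. The endpoints are ordered from left to right in the planar order. $\mathcal{T}_n$ denotes the set of plane binary trees with exactly $n+2$ endpoints. The reduced configuration of $T\in\mathcal{T}_n$ is $R(T)=(t_1,\dots,t_n)\in\{\bullet,\circ\}^n$. Here $t_k=\bullet$ if the $(k+1)$-th endpoint from the left is a left child, and $t_k=\circ$ if it is a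 right child. The leftmost and rightmost endpoints are ignored. $l(T)$ (respectively $r(T)$) is the number of vertices lying strictly between the leftmost (respectively rightmost) endpoint and the root on the path joining them, excluding both the endpoint and the root. Set $\mu(T)=\alpha^{-l(T)}\beta^{-r(T)}$. A last branching vertex of a plane binary tree is a non-endpoint vertex both of whose children are endpoints. A marked tree is a pair $(T,v)$ with $T\in\mathcal{T}_n$ and $v$ a last branching vertex of $T$. The set of marked trees is $\widehat{\mathcal{T}}_n$. The map $f:\widehat{\mathcal{T}}_n\to\mathcal{T}_n$, $f(T,v)=T$, forgets the mark. For $(T,v)\in\widehat{\mathcal{T}}_n$, define $l'(T,v)$ (respectively $r'(T,v)$) as the number of vertices other than $v$ lying strictly between the leftmost (respectively rightmost) endpoint and the root. Set $\hat\mu(T,v)=\alpha^{-l'(T,v)}\beta^{-r'(T,v)}$. Definition of $\pi:\widehat{\mathcal{T}}_n\to\widehat{\mathcal{T}}_n$. Let $(T,v)\in\widehat{\mathcal{T}}_n$, and let $a$ and $b$ be the left and right children of $v$ (both endpoints). Case 1: $v$ is a right child. - Delete the endpoint $a$ together with the edge $va$. The vertex $v$ and its remaining child $b$ are merged into a single endpoint, sitting at $v$'s position; this endpoint is a right child. - If $b$ was not the rightmost endpoint of $T$, replace the first right-child endpoint to the right of this new endpoint by a new internal vertex $w$ with two new endpoint children. - If $b$ was the rightmost endpoint of $T$, replace the rightmost left-child endpoint of the reduced tree by a new internal vertex $w$ with two new endpoint children. - In either sub-case, $\pi(T,v)=(T',w)$, where $T'$ is the resulting tree and the mark is on $w$.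 Case 2: $v$ is a left child. Apply the mirror image of Case 1, exchanging left and right. - Delete $b$ and the edge $vb$, merging $v$ and $a$ into an endpoint. - If $a$ was not the leftmost endpoint of $T$, graft a cherry $w$ onto the first left-child endpoint to its left. - Otherwise, graft the cherry $w$ onto the leftmost right-child endpoint. - Mark $w$. For $\mathcal{C},\mathcal{C}'\in\{\bullet,\circ\}^n$, define $\mathcal{F}(\mathcal{C}'\to\mathcal{C}):=(R\circ f)^{-1}\{\mathcal{C}'\}\cap(R\circ f\circ\pi)^{-1}\{\mathcal{C}\}$. *)

theory Defs
  imports Complex_Main
begin

text \<open>A vertex is addressed by its path from the root:
  a list of booleans, False = go to left child, True = go to right child.
  Configurations: True = particle (bullet), False = hole (circle).\<close>

datatype ptree = Leaf | Node ptree ptree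

fun leaves :: "ptree \<Rightarrow> bool list list" where
  "leaves Leaf = [[]]"
| "leaves (Node l r) = map (Cons False) (leaves l) @ map (Cons True) (leaves r)"

fun subt :: "ptree \<Rightarrow> bool list \<Rightarrow> ptree option" where
  "subt t [] = Some t"
| "subt Leaf (_ # _) = None"
| "subt (Node l r) (b # p) = subt (if b then r else l) p"

fun replace_at :: "bool list \<Rightarrow> ptree \<Rightarrow> ptree \<Rightarrow> ptree" where
  "replace_at [] s t = s"
| "replace_at (_ # _) s Leaf = Leaf"
| "replace_at (b # p) s (Node l r) =
     (if b then Node l (replace_at p s r) else Node (replace_at p s l) r)"

definition trees :: "nat \<Rightarrow> ptree set" where
  "trees n = {T. length (leaves T) = n + 2}"

definition last_branching :: "ptree \<Rightarrow> bool list \<Rightarrow> bool" where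
  "last_branching T v \<longleftrightarrow> subt T v = Some (Node Leaf Leaf)"

definition marked :: "nat \<Rightarrow> (ptree \<times> bool list) set" where
  "marked n = {(T, v). T \<in> trees n \<and> last_branching T v}"

definition forget :: "ptree \<times> bool list \<Rightarrow> ptree" where
  "forget x = fst x"

text \<open>Reduced configuration: the (k+1)-th endpoint gives a particle iff it is a left child.\<close>
definition reduced :: "ptree \<Rightarrow> bool list" where
  "reduced T = map (\<lambda>p. \<not> last p) (butlast (tl (leaves T)))"

definition between :: "bool list \<Rightarrow> bool list set" where
  "between p = {take k p | k. 0 < k \<and> k < length p}"

definition lcount :: "ptree \<Rightarrow> nat" where
  "lcount T = card (between (hd (leaves T)))"

definition rcount :: "ptree \<Rightarrow> nat" where
  "rcount T = card (between (last (leaves T)))"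

definition mu :: "real \<Rightarrow> real \<Rightarrow> ptree \<Rightarrow> real" where
  "mu \<alpha> \<beta> T = inverse (\<alpha> ^ lcount T) * inverse (\<beta> ^ rcount T)"

definition lcount' :: "ptree \<times> bool list \<Rightarrow> nat" where
  "lcount' x = card (between (hd (leaves (fst x))) - {snd x})"

definition rcount' :: "ptree \<times> bool list \<Rightarrow> nat" where
  "rcount' x = card (between (last (leaves (fst x))) - {snd x})"

definition mu_hat :: "real \<Rightarrow> real \<Rightarrow> ptree \<times> bool list \<Rightarrow> real" where
  "mu_hat \<alpha> \<beta> x = inverse (\<alpha> ^ lcount' x) * inverse (\<beta> ^ rcount' x)"

text \<open>Transition rates of open-boundary TASEP, W(C' -> C) = W_rate alpha beta C' C.\<close>
definition W_rate :: "real \<Rightarrow> real \<Rightarrow> bool list \<Rightarrow> bool list \<Rightarrow> real" where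
  "W_rate \<alpha> \<beta> C' C =
     (if \<exists>A. C' = False # A \<and> C = True # A then \<alpha>
      else if \<exists>A. C' = A @ [True] \<and> C = A @ [False] then \<beta>
      else if \<exists>A A'. C' = A @ [True, False] @ A' \<and> C = A @ [False, True] @ A' then 1
      else 0)"

text \<open>The map pi. Deleting the cherry at v leaves all other endpoint paths unchanged,
  and v becomes an endpoint; grafting a cherry at endpoint c turns c into the
  (marked) vertex w = c.\<close>
definition pi_map :: "ptree \<times> bool list \<Rightarrow> ptree \<times> bool list" where
  "pi_map x =
     (let T = fst x; v = snd x in
      if v = [] then x else
      let T0 = replace_at v Leaf T;
          L = leaves T0;
          pre = takeWhile (\<lambda>p. p \<noteq> v) L;
          post = tl (dropWhile (\<lambda>p. p \<noteq> v) L);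
          c = (if last v then
                 (if post \<noteq> [] then hd (filter (\<lambda>p. last p) post)
                  else last (filter (\<lambda>p. \<not> last p) L))
               else
                 (if pre \<noteq> [] then last (filter (\<lambda>p. \<not> last p) pre)
                  else hd (filter (\<lambda>p. last p) L)))
      in (replace_at c (Node Leaf Leaf) T0, c))"

definition Fset :: "nat \<Rightarrow> bool list \<Rightarrow> bool list \<Rightarrow> (ptree \<times> bool list) set" where
  "Fset n C' C = {x \<in> marked n. reduced (forget x) = C' \<and> reduced (forget (pi_map x)) = C}"

end

theory Submission
  imports Defs
begin

lemma leaves_ne[simp]: "leaves T \<noteq> []"
  by (induction T) auto

lemma hd_leaves_F: "set (hd (leaves T)) \<subseteq> {False}"
  by (induction T) (auto simp: hd_append hd_map)

lemma last_leaves_T: "set (last (leaves T)) \<subseteq> {True}"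
  by (induction T) (auto simp: last_append last_map)

lemma hd_leaves_Node: "T \<noteq> Leaf \<Longrightarrow> hd (leaves T) \<noteq> [] \<and> \<not> last (hd (leaves T))"
proof (cases T)
  case (Node l r)
  then show ?thesis using hd_leaves_F[of l] leaves_ne[of l]
    by (auto simp: hd_append hd_map last_ConsR dest!: last_in_set)
qed simp

lemma last_leaves_Node: "T \<noteq> Leaf \<Longrightarrow> last (leaves T) \<noteq> [] \<and> last (last (leaves T))"
proof (cases T)
  case (Node l r)
  then show ?thesis using last_leaves_T[of r] leaves_ne[of r]
    by (auto simp: last_append last_map last_ConsR dest!: last_in_set)
qed simp

lemma leaves_nonnil: "T \<noteq> Leaf \<Longrightarrow> p \<in> set (leaves T) \<Longrightarrow> p \<noteq> []"
  by (cases T) auto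

lemma leaves_subt: "p \<in> set (leaves T) \<Longrightarrow> subt T p = Some Leaf"
  by (induction T arbitrary: p) auto

lemma distinct_leaves: "distinct (leaves T)"
  by (induction T) (auto simp: distinct_map)

lemma prefix_free: "p \<in> set (leaves T) \<Longrightarrow> q \<in> set (leaves T) \<Longrightarrow> take (length p) q = p \<Longrightarrow> p = q"
proof (induction T arbitrary: p q)
  case Leaf
  then show ?case by auto
next
  case (Node l r)
  define b p' b' q' where "b = hd p" "p' = tl p" "b' = hd q" "q' = tl q"
  from Node.prems(1) have p: "p = b # p'" "p' \<in> set (leaves (if b then r else l))"
    unfolding b_p'_b'_q'_def by auto
  from Node.prems(2) have q: "q = b' # q'" "q' \<in> set (leaves (if b' then r else l))"
    unfolding b_p'_b'_q'_def by auto
  from Node.prems(3) p q have bb: "b' = b" and tk: "take (length p') q' = p'" by auto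
  show ?case
  proof (cases b)
    case True
    then have "p' = q'" using Node.IH(2)[of p' q'] p(2) q(2) bb tk by simp
    then show ?thesis using p(1) q(1) bb by simp
  next
    case False
    then have "p' = q'" using Node.IH(1)[of p' q'] p(2) q(2) bb tk by simp
    then show ?thesis using p(1) q(1) bb by simp
  qed
qed

lemma decomp: "subt T p = Some s \<Longrightarrow> \<exists>P Q. leaves T = P @ map ((@) p) (leaves s) @ Q \<and>
   (\<forall>s'. leaves (replace_at p s' T) = P @ map ((@) p) (leaves s') @ Q)"
proof (induction p arbitrary: T)
  case Nil
  then show ?case by (intro exI[of _ "[]"]) auto
next
  case (Cons b p)
  then obtain l r where T: "T = Node l r" by (cases T) auto
  show ?case
  proof (cases b)
    case True
    from Cons.IH[of r] Cons.prems T True obtain P Q where "leaves r = P @ map ((@) p) (leaves s) @ Q"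
      "\<forall>s'. leaves (replace_at p s' r) = P @ map ((@) p) (leaves s') @ Q" by auto
    then show ?thesis using T True
      by (intro exI[of _ "map (Cons False) (leaves l) @ map (Cons True) P"] exI[of _ "map (Cons True) Q"])
        (auto simp: comp_def)
  next
    case False
    from Cons.IH[of l] Cons.prems T False obtain P Q where "leaves l = P @ map ((@) p) (leaves s) @ Q"
      "\<forall>s'. leaves (replace_at p s' l) = P @ map ((@) p) (leaves s') @ Q" by auto
    then show ?thesis using T False
      by (intro exI[of _ "map (Cons False) P"] exI[of _ "map (Cons False) Q @ map (Cons True) (leaves r)"])
        (auto simp: comp_def)
  qed
qed

lemma subt_replace: "subt T p \<noteq> None \<Longrightarrow> subt (replace_at p s T) p = Some s"
  by (induction p s T rule: replace_at.induct) auto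

lemma replace_replace: "replace_at p a (replace_at p b T) = replace_at p a T"
  by (induction p b T rule: replace_at.induct) auto

lemma replace_same: "subt T p = Some t \<Longrightarrow> replace_at p t T = T"
  by (induction p t T rule: replace_at.induct) auto

lemma tw: "c \<notin> set P \<Longrightarrow> takeWhile (\<lambda>q. q \<noteq> c) (P @ c # Q) = P \<and> dropWhile (\<lambda>q. q \<noteq> c) (P @ c # Q) = c # Q"
  by (induction P) auto

lemma uniq: "distinct (P @ [c] @ Q) \<Longrightarrow> P @ [c] @ Q = P' @ [c] @ Q' \<Longrightarrow> P = P' \<and> Q = Q'"
proof -
  assume d: "distinct (P @ [c] @ Q)" and e: "P @ [c] @ Q = P' @ [c] @ Q'"
  have d2: "distinct (P' @ [c] @ Q')" using d by (simp only: e)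
  have cP: "c \<notin> set P" using d by simp
  have cP': "c \<notin> set P'" using d2 by simp
  have e': "P @ c # Q = P' @ c # Q'" using e by simp
  have "P = takeWhile (\<lambda>q. q \<noteq> c) (P @ c # Q)" using tw[OF cP, of Q] by simp
  also have "\<dots> = takeWhile (\<lambda>q. q \<noteq> c) (P' @ c # Q')" by (simp only: e')
  also have "\<dots> = P'" using tw[OF cP', of Q'] by simp
  finally have 1: "P = P'" .
  have "c # Q = dropWhile (\<lambda>q. q \<noteq> c) (P @ c # Q)" using tw[OF cP, of Q] by simp
  also have "\<dots> = dropWhile (\<lambda>q. q \<noteq> c) (P' @ c # Q')" by (simp only: e')
  also have "\<dots> = c # Q'" using tw[OF cP', of Q'] by simp
  finally show ?thesis using 1 by simp
qed

lemma card_between: "card (between p) = length p - 1"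
proof -
  have "between p = (\<lambda>k. take k p) ` {0<..<length p}" unfolding between_def by (auto simp: image_iff)
  moreover have "inj_on (\<lambda>k. take k p) {0<..<length p}"
    by (rule inj_onI) (drule arg_cong[of _ _ length], auto)
  ultimately show ?thesis by (simp add: card_image)
qed

lemma finite_between: "finite (between p)"
proof -
  have "between p = (\<lambda>k. take k p) ` {0<..<length p}" unfolding between_def by (auto simp: image_iff)
  then show ?thesis by simp
qed


lemma K:
  assumes s: "subt T v = Some (Node Leaf Leaf)" and v: "v \<noteq> []"
  shows "lcount' (T,v) = length (hd (leaves (replace_at v Leaf T))) - 1 \<and>
         rcount' (T,v) = length (last (leaves (replace_at v Leaf T))) - 1"
proof -
  obtain P Q where d1: "leaves T = P @ [v@[False], v@[True]] @ Q"
    and d2: "leaves (replace_at v Leaf T) = P @ [v] @ Q"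
    using decomp[OF s] by auto
  have pf: "p = q" if "p \<in> set (P@[v]@Q)" "q \<in> set (P@[v]@Q)" "take (length p) q = p" for p q
    using prefix_free[of p "replace_at v Leaf T" q] d2 that by simp
  have dist: "distinct (P @ [v] @ Q)" using distinct_leaves[of "replace_at v Leaf T"] d2 by simp
  have notin: "v \<notin> between h" if h: "h \<in> set (P@[v]@Q)" "h \<noteq> v" for h
  proof
    assume "v \<in> between h"
    then obtain k where k: "v = take k h" "0<k" "k<length h" unfolding between_def by auto
    then have lk: "length v = k" by simp
    with k have "take (length v) h = v" by simp
    then have "v = h" using pf[of v h] h(1) by simp
    with k lk show False by simp
  qed
  have vin: "v \<in> between (v @ [b])" for b
    unfolding between_def using v by (auto intro!: exI[of _ "length v"])
  have l: "lcount' (T,v) = length (hd (leaves (replace_at v Leaf T))) - 1"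
  proof (cases "P = []")
    case True
    then have "hd (leaves T) = v @ [False]" "hd (leaves (replace_at v Leaf T)) = v" using d1 d2 by auto
    then show ?thesis using vin[of False] finite_between[of "v @ [False]"]
      by (simp add: lcount'_def card_between)
  next
    case False
    then have e: "hd (leaves T) = hd P" "hd (leaves (replace_at v Leaf T)) = hd P" "hd P \<in> set P"
      using d1 d2 by auto
    then have "hd P \<noteq> v" using dist by auto
    then have "v \<notin> between (hd P)" using notin[of "hd P"] e(3) by auto
    then show ?thesis using e by (simp add: lcount'_def card_between)
  qed
  have r: "rcount' (T,v) = length (last (leaves (replace_at v Leaf T))) - 1"
  proof (cases "Q = []")
    case True
    then have "last (leaves T) = v @ [True]" "last (leaves (replace_at v Leaf T)) = v" using d1 d2 by auto
    then show ?thesis using vin[of True] finite_between[of "v @ [True]"]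
      by (simp add: rcount'_def card_between)
  next
    case False
    then have e: "last (leaves T) = last Q" "last (leaves (replace_at v Leaf T)) = last Q" "last Q \<in> set Q"
      using d1 d2 by auto
    then have "last Q \<noteq> v" using dist by auto
    then have "v \<notin> between (last Q)" using notin[of "last Q"] e(3) by auto
    then show ?thesis using e by (simp add: rcount'_def card_between)
  qed
  show ?thesis using l r by simp
qed

definition nu :: "real \<Rightarrow> real \<Rightarrow> ptree \<Rightarrow> real" where
  "nu \<alpha> \<beta> T = inverse (\<alpha> ^ (length (hd (leaves T)) - 1)) * inverse (\<beta> ^ (length (last (leaves T)) - 1))"

lemma mu_nu: "mu \<alpha> \<beta> T = nu \<alpha> \<beta> T"
  by (simp add: mu_def nu_def lcount_def rcount_def card_between)

lemma muhat_nu: "subt T v = Some (Node Leaf Leaf) \<Longrightarrow> v \<noteq> [] \<Longrightarrow>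
   mu_hat \<alpha> \<beta> (T,v) = nu \<alpha> \<beta> (replace_at v Leaf T)"
  using K[of T v] by (simp add: mu_hat_def nu_def)

lemma graft: "leaves T0 = P @ [c] @ Q \<Longrightarrow>
   leaves (replace_at c (Node Leaf Leaf) T0) = P @ [c@[False], c@[True]] @ Q"
proof -
  assume e: "leaves T0 = P @ [c] @ Q"
  have "subt T0 c = Some Leaf" using leaves_subt[of c T0] e by simp
  from decomp[OF this] obtain P' Q' where a: "leaves T0 = P' @ [c] @ Q'"
    and b: "leaves (replace_at c (Node Leaf Leaf) T0) = P' @ [c@[False], c@[True]] @ Q'" by auto
  have "P = P' \<and> Q = Q'" using uniq[of P c Q P' Q'] distinct_leaves[of T0] e a by simp
  then show ?thesis using b by simp
qed

lemma red_eq: "reduced T = butlast (tl (map (\<lambda>p. \<not> last p) (leaves T)))"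
  by (simp add: reduced_def map_butlast map_tl)

lemma W_swap: "W_rate \<alpha> \<beta> (X @ [True, False] @ Y) (X @ [False, True] @ Y) = 1"
proof -
  have a: "\<not> (\<exists>A. X @ [True, False] @ Y = False # A \<and> X @ [False, True] @ Y = True # A)"
    by (cases X) auto
  have b: "\<not> (\<exists>A. X @ [True, False] @ Y = A @ [True] \<and> X @ [False, True] @ Y = A @ [False])"
  proof
    assume "\<exists>A. X @ [True, False] @ Y = A @ [True] \<and> X @ [False, True] @ Y = A @ [False]"
    then obtain A where A: "X @ [True, False] @ Y = A @ [True]" "X @ [False, True] @ Y = A @ [False]" by blast
    have l1: "last (X @ [True, False] @ Y) = True" using A(1) by simp
    have l2: "last (X @ [False, True] @ Y) = False" using A(2) by simp
    show False
    proof (cases "Y = []")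
      case True then show False using l1 by simp
    next
      case False then show False using l1 l2 by simp
    qed
  qed
  have c: "\<exists>A A'. X @ [True, False] @ Y = A @ [True, False] @ A' \<and> X @ [False, True] @ Y = A @ [False, True] @ A'"
    by blast
  show ?thesis unfolding W_rate_def by (simp only: if_not_P[OF a] if_not_P[OF b] if_P[OF c])
qed

lemma W_alpha: "W_rate \<alpha> \<beta> (False # A) (True # A) = \<alpha>"
  unfolding W_rate_def by auto

lemma W_beta: "W_rate \<alpha> \<beta> (A @ [True]) (A @ [False]) = \<beta>"
proof -
  have a: "\<not> (\<exists>B. A @ [True] = False # B \<and> A @ [False] = True # B)"
    by (cases A) auto
  have b: "\<exists>B. A @ [True] = B @ [True] \<and> A @ [False] = B @ [False]" by blast
  show ?thesis unfolding W_rate_def by (simp only: if_not_P[OF a] if_P[OF b])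
qed

lemma map_rep: "(\<forall>y\<in>set ls. \<not> last y) \<Longrightarrow> map (\<lambda>p. \<not> last p) ls = replicate (length ls) True"
  by (induction ls) auto

lemma map_rep2: "(\<forall>y\<in>set ls. last y) \<Longrightarrow> map (\<lambda>p. \<not> last p) ls = replicate (length ls) False"
  by (induction ls) auto

lemma pow_shift: "0 < (x::real) \<Longrightarrow> m \<noteq> 0 \<Longrightarrow> inverse (x ^ (m - 1)) = inverse (x ^ m) * x"
  by (cases m) auto


lemma main:
  assumes len: "length (leaves T) \<ge> 3" and s: "subt T v = Some (Node Leaf Leaf)"
    and ap: "0 < \<alpha>" and bp: "0 < \<beta>"
  shows "\<exists>c. pi_map (T,v) = (replace_at c (Node Leaf Leaf) (replace_at v Leaf T), c)
           \<and> c \<in> set (leaves (replace_at v Leaf T)) \<and> c \<noteq> []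
           \<and> mu_hat \<alpha> \<beta> (T,v) = mu \<alpha> \<beta> T * W_rate \<alpha> \<beta> (reduced T)
                 (reduced (replace_at c (Node Leaf Leaf) (replace_at v Leaf T)))"
proof -
  define T0 where "T0 = replace_at v Leaf T"
  have v: "v \<noteq> []" using s len by (cases "v = []") auto
  obtain P Q where d1: "leaves T = P @ [v@[False], v@[True]] @ Q" and d2: "leaves T0 = P @ [v] @ Q"
    using decomp[OF s] unfolding T0_def by auto
  have dist: "distinct (P @ [v] @ Q)" using distinct_leaves[of T0] d2 by simp
  have vP: "v \<notin> set P" using dist by simp
  have T0L: "T0 \<noteq> Leaf"
  proof
    assume "T0 = Leaf"
    then have "length (leaves T0) = 1" by simp
    then show False using d1 d2 len by simp
  qed
  have hdF: "hd (P@[v]@Q) \<noteq> [] \<and> \<not> last (hd (P@[v]@Q))" using hd_leaves_Node[OF T0L] d2 by simp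
  have lastT: "last (P@[v]@Q) \<noteq> [] \<and> last (last (P@[v]@Q))" using last_leaves_Node[OF T0L] d2 by simp
  have tw0: "takeWhile (\<lambda>p. p \<noteq> v) (leaves T0) = P" "tl (dropWhile (\<lambda>p. p \<noteq> v) (leaves T0)) = Q"
    using tw[OF vP, of Q] d2 by simp_all
  define c where "c = (if last v then
                 (if Q \<noteq> [] then hd (filter (\<lambda>p. last p) Q)
                  else last (filter (\<lambda>p. \<not> last p) (leaves T0)))
               else
                 (if P \<noteq> [] then last (filter (\<lambda>p. \<not> last p) P)
                  else hd (filter (\<lambda>p. last p) (leaves T0))))"
  have pi: "pi_map (T,v) = (replace_at c (Node Leaf Leaf) T0, c)"
    using v tw0 unfolding pi_map_def c_def T0_def by (simp add: Let_def)
  have mh: "mu_hat \<alpha> \<beta> (T,v) = nu \<alpha> \<beta> T0" using muhat_nu[OF s v] T0_def by simp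
  have mT: "mu \<alpha> \<beta> T = nu \<alpha> \<beta> T" by (rule mu_nu)
  let ?g = "\<lambda>p::bool list. \<not> last p"
  have key: "c \<in> set (leaves T0) \<and> nu \<alpha> \<beta> T0 = nu \<alpha> \<beta> T * W_rate \<alpha> \<beta> (reduced T)
                 (reduced (replace_at c (Node Leaf Leaf) T0))"
  proof (cases "last v")
    case lv: True
    have PnE: "P \<noteq> []"
    proof
      assume "P = []" then show False using hdF lv by simp
    qed
    show ?thesis
    proof (cases "Q = []")
      case QnE: False
      have "\<exists>x\<in>set Q. last x" using lastT QnE by (intro bexI[of _ "last Q"]) auto
      then obtain ls c' rest where Q: "Q = ls @ c' # rest" and lc: "last c'" and ls: "\<forall>y\<in>set ls. \<not> last y"
        using split_list_first_prop[of Q "\<lambda>p. last p"] by blast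
      have cc: "c = c'" unfolding c_def using lv QnE Q lc ls by (simp add: filter_empty_conv)
      have lT': "leaves (replace_at c (Node Leaf Leaf) T0) = (P @ v # ls) @ [c'@[False], c'@[True]] @ rest"
        unfolding cc by (rule graft) (simp add: d2 Q)
      obtain p0 P1 where P: "P = p0 # P1" using PnE by (cases P) auto
      define Y where "Y = replicate (length ls) True @ False # map ?g rest"
      have m1: "map ?g (leaves T) = ?g p0 # (map ?g P1 @ [True, False] @ Y)"
        using d1 Q P lc map_rep[OF ls] by (simp add: Y_def)
      have m2: "map ?g (leaves (replace_at c (Node Leaf Leaf) T0)) = ?g p0 # (map ?g P1 @ [False, True] @ Y)"
        using lT' P lv lc map_rep[OF ls] by (simp add: Y_def replicate_append_same[symmetric])
      have YnE: "Y \<noteq> []" by (simp add: Y_def)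
      have r1: "reduced T = map ?g P1 @ [True, False] @ butlast Y"
        unfolding red_eq m1 using YnE by (simp add: butlast_append)
      have r2: "reduced (replace_at c (Node Leaf Leaf) T0) = map ?g P1 @ [False, True] @ butlast Y"
        unfolding red_eq m2 using YnE by (simp add: butlast_append)
      have "nu \<alpha> \<beta> T0 = nu \<alpha> \<beta> T" unfolding nu_def using d1 d2 PnE QnE by simp
      then show ?thesis using r1 r2 W_swap cc d2 Q by simp
    next
      case QE: True
      have "\<exists>x\<in>set P. \<not> last x" using hdF PnE by (intro bexI[of _ "hd P"]) auto
      then obtain P1 c' rs where P: "P = P1 @ c' # rs" and lc: "\<not> last c'" and rs: "\<forall>y\<in>set rs. \<not> \<not> last y"
        using split_list_last_prop[of P "\<lambda>p. \<not> last p"] by blast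
      have cc: "c = c'" unfolding c_def using lv QE P lc rs d2 by (simp add: filter_empty_conv)
      have lT': "leaves (replace_at c (Node Leaf Leaf) T0) = P1 @ [c'@[False], c'@[True]] @ (rs @ [v])"
        unfolding cc by (rule graft) (simp add: d2 P QE)
      define Z where "Z = map ?g P1 @ True # replicate (length rs) False"
      have rs': "\<forall>y\<in>set rs. last y" using rs by simp
      have m1: "map ?g (leaves T) = Z @ [True, False]"
        using d1 QE P lc map_rep2[OF rs'] by (simp add: Z_def)
      have m2: "map ?g (leaves (replace_at c (Node Leaf Leaf) T0)) = Z @ [False, False]"
        using lT' lv lc map_rep2[OF rs'] by (simp add: Z_def replicate_append_same[symmetric])
      have ZnE: "Z \<noteq> []" by (simp add: Z_def)
      have r1: "reduced T = tl Z @ [True]"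
        unfolding red_eq m1 using ZnE by (simp add: butlast_append)
      have r2: "reduced (replace_at c (Node Leaf Leaf) T0) = tl Z @ [False]"
        unfolding red_eq m2 using ZnE by (simp add: butlast_append)
      have h: "hd (leaves T) = hd (leaves T0)" using d1 d2 PnE by simp
      have l1: "last (leaves T) = v @ [True]" "last (leaves T0) = v" using d1 d2 QE by auto
      have "nu \<alpha> \<beta> T0 = nu \<alpha> \<beta> T * \<beta>"
        unfolding nu_def h l1 using pow_shift[OF bp, of "length v"] v by (simp add: mult.assoc)
      then show ?thesis using r1 r2 W_beta cc d2 P by simp
    qed
  next
    case lv: False
    have QnE: "Q \<noteq> []"
    proof
      assume "Q = []" then show False using lastT lv by simp
    qed
    show ?thesis
    proof (cases "P = []")
      case PnE: False
      have "\<exists>x\<in>set P. \<not> last x" using hdF PnE by (intro bexI[of _ "hd P"]) auto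
      then obtain P1 c' rs where P: "P = P1 @ c' # rs" and lc: "\<not> last c'" and rs: "\<forall>y\<in>set rs. \<not> \<not> last y"
        using split_list_last_prop[of P "\<lambda>p. \<not> last p"] by blast
      have cc: "c = c'" unfolding c_def using lv PnE P lc rs by (simp add: filter_empty_conv)
      have lT': "leaves (replace_at c (Node Leaf Leaf) T0) = P1 @ [c'@[False], c'@[True]] @ (rs @ v # Q)"
        unfolding cc by (rule graft) (simp add: d2 P)
      define X where "X = map ?g P1 @ True # replicate (length rs) False"
      have rs': "\<forall>y\<in>set rs. last y" using rs by simp
      have m1: "map ?g (leaves T) = X @ [True, False] @ map ?g Q"
        using d1 P lc map_rep2[OF rs'] by (simp add: X_def)
      have m2: "map ?g (leaves (replace_at c (Node Leaf Leaf) T0)) = X @ [False, True] @ map ?g Q"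
        using lT' lv lc map_rep2[OF rs'] by (simp add: X_def replicate_append_same[symmetric])
      have XnE: "X \<noteq> []" by (simp add: X_def)
      have YnE: "map ?g Q \<noteq> []" using QnE by simp
      have r1: "reduced T = tl X @ [True, False] @ butlast (map ?g Q)"
        unfolding red_eq m1 using XnE YnE by (simp add: butlast_append)
      have r2: "reduced (replace_at c (Node Leaf Leaf) T0) = tl X @ [False, True] @ butlast (map ?g Q)"
        unfolding red_eq m2 using XnE YnE by (simp add: butlast_append)
      have "nu \<alpha> \<beta> T0 = nu \<alpha> \<beta> T" unfolding nu_def using d1 d2 PnE QnE by simp
      then show ?thesis using r1 r2 W_swap cc d2 P by simp
    next
      case PE: True
      have "\<exists>x\<in>set Q. last x" using lastT QnE by (intro bexI[of _ "last Q"]) auto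
      then obtain ls c' rest where Q: "Q = ls @ c' # rest" and lc: "last c'" and ls: "\<forall>y\<in>set ls. \<not> last y"
        using split_list_first_prop[of Q "\<lambda>p. last p"] by blast
      have cc: "c = c'" unfolding c_def using lv PE Q lc ls d2 by (simp add: filter_empty_conv)
      have lT': "leaves (replace_at c (Node Leaf Leaf) T0) = (v # ls) @ [c'@[False], c'@[True]] @ rest"
        unfolding cc by (rule graft) (simp add: d2 Q PE)
      define Y where "Y = replicate (length ls) True @ False # map ?g rest"
      have m1: "map ?g (leaves T) = True # False # Y"
        using d1 Q PE lc map_rep[OF ls] by (simp add: Y_def)
      have m2: "map ?g (leaves (replace_at c (Node Leaf Leaf) T0)) = True # True # Y"
        using lT' lv lc map_rep[OF ls] by (simp add: Y_def replicate_append_same[symmetric])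
      have YnE: "Y \<noteq> []" by (simp add: Y_def)
      have r1: "reduced T = False # butlast Y"
        unfolding red_eq m1 using YnE by simp
      have r2: "reduced (replace_at c (Node Leaf Leaf) T0) = True # butlast Y"
        unfolding red_eq m2 using YnE by simp
      have h: "last (leaves T) = last (leaves T0)" using d1 d2 QnE by simp
      have l1: "hd (leaves T) = v @ [False]" "hd (leaves T0) = v" using d1 d2 PE by auto
      have "nu \<alpha> \<beta> T0 = nu \<alpha> \<beta> T * \<alpha>"
        unfolding nu_def h l1 using pow_shift[OF ap, of "length v"] v by (simp add: mult_ac)
      then show ?thesis using r1 r2 W_alpha cc d2 Q PE by simp
    qed
  qed
  have "c \<noteq> []" using leaves_nonnil[OF T0L] key by simp
  then show ?thesis using pi key mh mT unfolding T0_def by auto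
qed


theorem mainTheorem6:
  fixes n :: nat and \<alpha> \<beta> :: real
  assumes "n \<ge> 1" and "0 < \<alpha>" and "\<alpha> \<le> 1" and "0 < \<beta>" and "\<beta> \<le> 1"
  shows "(\<forall>C C'. length C = n \<longrightarrow> length C' = n \<longrightarrow>
            (\<forall>x \<in> Fset n C' C. mu_hat \<alpha> \<beta> x = mu \<alpha> \<beta> (forget x) * W_rate \<alpha> \<beta> C' C))
       \<and> (\<forall>x \<in> marked n. mu_hat \<alpha> \<beta> (pi_map x) = mu_hat \<alpha> \<beta> x)"
proof -
  have M: "\<exists>c. pi_map (T,v) = (replace_at c (Node Leaf Leaf) (replace_at v Leaf T), c)
           \<and> c \<in> set (leaves (replace_at v Leaf T)) \<and> c \<noteq> []
           \<and> mu_hat \<alpha> \<beta> (T,v) = mu \<alpha> \<beta> T * W_rate \<alpha> \<beta> (reduced T)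
                 (reduced (replace_at c (Node Leaf Leaf) (replace_at v Leaf T)))"
    if "(T, v) \<in> marked n" for T v
  proof -
    have "length (leaves T) \<ge> 3" "subt T v = Some (Node Leaf Leaf)"
      using that assms(1) by (auto simp: marked_def trees_def last_branching_def)
    then show ?thesis using main assms(2,4) by blast
  qed
  have A: "mu_hat \<alpha> \<beta> x = mu \<alpha> \<beta> (forget x) * W_rate \<alpha> \<beta> C' C" if x: "x \<in> Fset n C' C" for x C C'
  proof -
    obtain T v where xv: "x = (T, v)" by (cases x)
    have xm: "(T,v) \<in> marked n" and r1: "reduced T = C'" and r2: "reduced (fst (pi_map (T,v))) = C"
      using x xv by (auto simp: Fset_def forget_def)
    from M[OF xm] obtain c where c: "pi_map (T,v) = (replace_at c (Node Leaf Leaf) (replace_at v Leaf T), c)"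
      "mu_hat \<alpha> \<beta> (T,v) = mu \<alpha> \<beta> T * W_rate \<alpha> \<beta> (reduced T)
                 (reduced (replace_at c (Node Leaf Leaf) (replace_at v Leaf T)))" by blast
    show ?thesis using c r1 r2 xv by (simp add: forget_def)
  qed
  have B: "mu_hat \<alpha> \<beta> (pi_map x) = mu_hat \<alpha> \<beta> x" if x: "x \<in> marked n" for x
  proof -
    obtain T v where xv: "x = (T, v)" by (cases x)
    have xm: "(T,v) \<in> marked n" using x xv by simp
    have s: "subt T v = Some (Node Leaf Leaf)" using xm by (simp add: marked_def last_branching_def)
    from M[OF xm] obtain c where c: "pi_map (T,v) = (replace_at c (Node Leaf Leaf) (replace_at v Leaf T), c)"
      "c \<in> set (leaves (replace_at v Leaf T))" "c \<noteq> []" by blast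
    define T0 where "T0 = replace_at v Leaf T"
    have v: "v \<noteq> []" using xm assms(1) by (cases "v = []") (auto simp: marked_def trees_def last_branching_def)
    have sc: "subt T0 c = Some Leaf" using leaves_subt c(2) T0_def by simp
    have s': "subt (replace_at c (Node Leaf Leaf) T0) c = Some (Node Leaf Leaf)"
      using subt_replace[of T0 c] sc by simp
    have bk: "replace_at c Leaf (replace_at c (Node Leaf Leaf) T0) = T0"
      using replace_replace replace_same[OF sc] by simp
    have "mu_hat \<alpha> \<beta> (pi_map x) = nu \<alpha> \<beta> T0"
      using muhat_nu[OF s' c(3)] bk c(1) xv T0_def by simp
    also have "\<dots> = mu_hat \<alpha> \<beta> x" using muhat_nu[OF s v] xv T0_def by simp
    finally show ?thesis .
  qed
  show ?thesis using A B by blast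
qed

end
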